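(* Let $\mathcal{A}_1$ and $\mathcal{A}_2$ be deterministic timed automata over the same alphabet and the same clock set. If $\mathscr{L}_r(\mathcal{A}_1)=\mathscr{L}_r(\mathcal{A}_2)$, then $\mathcal{L}(\mathcal{A}_1)=\mathcal{L}(\mathcal{A}_2)$.
   Context: Let $\Sigma$ be a finite alphabet and $\mathcal{C}=\{c_1,\dots,c_m\}$ a finite set of clocks. A clock constraint is a finite conjunction of atomic constraints $c\sim k$ ($c\in\mathcal{C}$, $k\in\mathbb{N}$, ${\sim}\in\{<,\le,=,\ge,>\}$). A timed automaton is $\mathcal{A}=(\Sigma,L,l_0,F,\mathcal{C},\Delta)$ with finite location set $L$, initial $l_0$, accepting $F\subseteq L$, transitions $\Delta\subseteq L\times\Sigma\times\Phi(\mathcal{C})\times2^{\mathcal{C}}\times L$. A run over a delay-timed word $\omega=(\sigma_1,t_1)\cdots(\sigma_n,t_n)\in(\Sigma\times\mathbb{R}_{\ge0})^*$ is $(l_0,\nu_0)\xrightarrow{t_1,\sigma_1}\cdots\xrightarrow{t_n,\sigma_n}(l_n,\nu_n)$ with $\nu_0\equiv0$ and transitions $(l_{i-1},\sigma_i,\phi_i,\mathcal{B}_i,l_i)\in\Delta$ such that $\nu_{i-1}+t_i$ satisfies $\phi_i$ and $\nu_i$ is $\nu_{i-1}+t_i$ with the clocks of $\mathcal{B}_i$ set to $0$; it is accepting if $l_n\in F$. The timed language $\mathcal{L}(\mathcal{A})$ is the set of delay-timed words having an accepting run. $\mathcal{A}$ is a deterministic timed automaton if every delay-timed word has at most one run.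 The reset-clocked word of such a run is $(\sigma_1,\mathbf{v}_1,\mathbf{b}_1)\cdots(\sigma_n,\mathbf{v}_n,\mathbf{b}_n)$ with $\mathbf{v}_i=\nu_{i-1}+t_i\in\mathbb{R}_{\ge0}^m$ and $\mathbf{b}_{i}\in\{\top,\bot\}^m$, $\mathbf{b}_{i,j}=\top$ iff $c_j\in\mathcal{B}_i$; the reset-clocked language $\mathscr{L}_r(\mathcal{A})$ is the set of reset-clocked words of accepting runs of $\mathcal{A}$. *)

theory Defs
  imports Complex_Main
begin

text \<open>Clocks are c_0, ..., c_(m-1), represented by the natural numbers below m.
 A clock valuation is a function nat => real (only values below m matter).\<close>

datatype cmp = Lt | Le | Eq | Ge | Gt

text \<open>Atomic constraint c ~ k with c a clock index and k a natural number.\<close>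
type_synonym atom = "nat \<times> cmp \<times> nat"
type_synonym constr = "atom list"

fun cmp_sat :: "cmp \<Rightarrow> real \<Rightarrow> real \<Rightarrow> bool" where
  "cmp_sat Lt x k = (x < k)"
| "cmp_sat Le x k = (x \<le> k)"
| "cmp_sat Eq x k = (x = k)"
| "cmp_sat Ge x k = (x \<ge> k)"
| "cmp_sat Gt x k = (x > k)"

definition sat :: "(nat \<Rightarrow> real) \<Rightarrow> constr \<Rightarrow> bool" where
  "sat \<nu> \<phi> = (\<forall>(c, op, k) \<in> set \<phi>. cmp_sat op (\<nu> c) (real k))"

text \<open>Timed automaton (Sigma, L, l0, F, C, Delta) with C = {c_0..c_(m-1)}.
  Transitions (l, sigma, phi, B, l').\<close>
record ('s, 'l) ta =
  alph :: "'s set"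
  locs :: "'l set"
  init :: 'l
  acc :: "'l set"
  nclk :: nat
  trans :: "('l \<times> 's \<times> constr \<times> nat set \<times> 'l) set"

definition well_formed :: "('s, 'l) ta \<Rightarrow> bool" where
  "well_formed A \<longleftrightarrow> finite (alph A) \<and> finite (locs A) \<and> init A \<in> locs A \<and>
     acc A \<subseteq> locs A \<and> finite (trans A) \<and>
     (\<forall>(l, s, \<phi>, B, l') \<in> trans A. l \<in> locs A \<and> s \<in> alph A \<and> l' \<in> locs A \<and>
        (\<forall>(c, _, _) \<in> set \<phi>. c < nclk A) \<and> B \<subseteq> {..<nclk A})"

definition reset :: "(nat \<Rightarrow> real) \<Rightarrow> nat set \<Rightarrow> nat \<Rightarrow> real" where
  "reset \<nu> B = (\<lambda>c. if c \<in> B then 0 else \<nu> c)"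

type_synonym 's dword = "('s \<times> real) list"

text \<open>We represent a run by the list of transitions taken; locations and valuations are
  determined by it.\<close>

fun run_from :: "('s, 'l) ta \<Rightarrow> 'l \<Rightarrow> (nat \<Rightarrow> real) \<Rightarrow> 's dword
     \<Rightarrow> ('l \<times> 's \<times> constr \<times> nat set \<times> 'l) list \<Rightarrow> 'l \<Rightarrow> bool" where
  "run_from A l \<nu> [] [] l' = (l' = l)"
| "run_from A l \<nu> ((s, t) # w) ((l1, s1, \<phi>, B, l2) # ts) l' =
     (t \<ge> 0 \<and> (l1, s1, \<phi>, B, l2) \<in> trans A \<and> l1 = l \<and> s1 = s \<and>
      sat (\<lambda>c. \<nu> c + t) \<phi> \<and> run_from A l2 (reset (\<lambda>c. \<nu> c + t) B) w ts l')"
| "run_from A l \<nu> _ _ l' = False"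

definition is_run :: "('s, 'l) ta \<Rightarrow> 's dword \<Rightarrow> ('l \<times> 's \<times> constr \<times> nat set \<times> 'l) list \<Rightarrow> bool" where
  "is_run A w ts \<longleftrightarrow> (\<exists>l'. run_from A (init A) (\<lambda>_. 0) w ts l')"

definition accepting_run :: "('s, 'l) ta \<Rightarrow> 's dword \<Rightarrow> ('l \<times> 's \<times> constr \<times> nat set \<times> 'l) list \<Rightarrow> bool" where
  "accepting_run A w ts \<longleftrightarrow> (\<exists>l'. run_from A (init A) (\<lambda>_. 0) w ts l' \<and> l' \<in> acc A)"

definition timed_lang :: "('s, 'l) ta \<Rightarrow> 's dword set" where
  "timed_lang A = {w. (\<forall>(s, t) \<in> set w. s \<in> alph A \<and> t \<ge> 0) \<and> (\<exists>ts. accepting_run A w ts)}"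

definition deterministic :: "('s, 'l) ta \<Rightarrow> bool" where
  "deterministic A \<longleftrightarrow> (\<forall>w ts ts'. is_run A w ts \<and> is_run A w ts' \<longrightarrow> ts = ts')"

text \<open>Reset-clocked letters (s, v, b) with v in R^m and b in {T,F}^m as lists of length m.\<close>
type_synonym 's rcword = "('s \<times> real list \<times> bool list) list"

fun rc_of :: "nat \<Rightarrow> (nat \<Rightarrow> real) \<Rightarrow> 's dword \<Rightarrow> ('l \<times> 's \<times> constr \<times> nat set \<times> 'l) list \<Rightarrow> 's rcword" where
  "rc_of m \<nu> ((s, t) # w) ((l1, s1, \<phi>, B, l2) # ts) =
     (s, map (\<lambda>c. \<nu> c + t) [0..<m], map (\<lambda>c. c \<in> B) [0..<m])
       # rc_of m (reset (\<lambda>c. \<nu> c + t) B) w ts"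
| "rc_of m \<nu> _ _ = []"

definition reset_clocked_lang :: "('s, 'l) ta \<Rightarrow> 's rcword set" where
  "reset_clocked_lang A = {rc_of (nclk A) (\<lambda>_. 0) w ts | w ts. accepting_run A w ts}"

end

theory Submission
  imports Defs
begin

lemma run_len: "run_from A l \<nu> w ts l' \<Longrightarrow> length ts = length w"
  by (induction A l \<nu> w ts l' rule: run_from.induct) auto

lemma sat_cong:
  assumes "\<forall>(c, _, _) \<in> set \<phi>. c < m" and "\<forall>c<m. \<nu> c = \<mu> c"
  shows "sat \<nu> \<phi> = sat \<mu> \<phi>"
  using assms unfolding sat_def by fastforce

lemma transfer_run:
  assumes wf: "\<forall>(l, s, \<phi>, B, l2) \<in> trans A. (\<forall>(c, _, _) \<in> set \<phi>. c < m)"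
  shows "run_from A l \<nu>' w' ts' l' \<Longrightarrow> (\<forall>c<m. \<nu> c = \<nu>' c) \<Longrightarrow>
    rc_of m \<nu> w ts = rc_of m \<nu>' w' ts' \<Longrightarrow> length ts = length w \<Longrightarrow>
    (\<forall>(s, t) \<in> set w. t \<ge> 0) \<Longrightarrow> run_from A l \<nu> w ts' l'"
proof (induction w' arbitrary: l \<nu>' ts' \<nu> w ts)
  case Nil
  then show ?case
    by (cases ts'; cases w; cases ts) auto
next
  case (Cons a w')
  obtain s' t' where a: "a = (s', t')" by force
  obtain tr ts'' where ts': "ts' = tr # ts''" using Cons.prems(1) a by (cases ts') auto
  obtain l1 s1 \<phi> B l2 where tr: "tr = (l1, s1, \<phi>, B, l2)" by (cases tr) auto
  obtain s t w0 where w: "w = (s, t) # w0"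
    using Cons.prems(3,4) a ts' tr by (cases w; cases ts) auto
  obtain tr1 ts1 where ts: "ts = tr1 # ts1" using Cons.prems(4) w by (cases ts) auto
  obtain k1 u1 \<phi>1 B1 k2 where tr1: "tr1 = (k1, u1, \<phi>1, B1, k2)" by (cases tr1) auto
  have R: "t' \<ge> 0" "tr \<in> trans A" "l1 = l" "s1 = s'" "sat (\<lambda>c. \<nu>' c + t') \<phi>"
    "run_from A l2 (reset (\<lambda>c. \<nu>' c + t') B) w' ts'' l'"
    using Cons.prems(1) a ts' tr by auto
  have E: "s = s'" "map (\<lambda>c. \<nu> c + t) [0..<m] = map (\<lambda>c. \<nu>' c + t') [0..<m]"
    "map (\<lambda>c. c \<in> B1) [0..<m] = map (\<lambda>c. c \<in> B) [0..<m]"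
    "rc_of m (reset (\<lambda>c. \<nu> c + t) B1) w0 ts1 = rc_of m (reset (\<lambda>c. \<nu>' c + t') B) w' ts''"
    using Cons.prems(3) a ts' tr w ts tr1 by auto
  have ag: "\<forall>c<m. \<nu> c + t = \<nu>' c + t'"
  proof (intro allI impI)
    fix c assume "c < m"
    then show "\<nu> c + t = \<nu>' c + t'" using arg_cong[OF E(2), of "\<lambda>xs. xs ! c"] by simp
  qed
  have agB: "\<forall>c<m. (c \<in> B1) = (c \<in> B)"
  proof (intro allI impI)
    fix c assume "c < m"
    then show "(c \<in> B1) = (c \<in> B)" using arg_cong[OF E(3), of "\<lambda>xs. xs ! c"] by simp
  qed
  have rcfun: "\<And>\<mu> \<mu>' v ts. (\<forall>c<m. \<mu> c = \<mu>' c) \<Longrightarrow> rc_of m \<mu> v ts = rc_of m \<mu>' v ts"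
  proof -
    fix \<mu> \<mu>' v ts
    show "(\<forall>c<m. \<mu> c = \<mu>' c) \<Longrightarrow> rc_of m \<mu> v ts = rc_of m \<mu>' v ts"
    proof (induction m \<mu> v ts arbitrary: \<mu>' rule: rc_of.induct)
      case (1 m \<nu> s t w l1 s1 \<phi> B l2 ts)
      have "\<forall>c<m. reset (\<lambda>c. \<nu> c + t) B c = reset (\<lambda>c. \<mu>' c + t) B c"
        using 1(2) by (simp add: reset_def)
      from 1(1)[OF this] 1(2) show ?case by simp
    qed auto
  qed
  have e2: "rc_of m (reset (\<lambda>c. \<nu> c + t) B) w0 ts1 = rc_of m (reset (\<lambda>c. \<nu> c + t) B1) w0 ts1"
    by (rule rcfun) (use agB in \<open>simp add: reset_def\<close>)
  have agr: "\<forall>c<m. reset (\<lambda>c. \<nu> c + t) B c = reset (\<lambda>c. \<nu>' c + t') B c"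
    using ag by (simp add: reset_def)
  have IH: "run_from A l2 (reset (\<lambda>c. \<nu> c + t) B) w0 ts'' l'"
    apply (rule Cons.IH[OF R(6) agr, where ?w=w0 and ?ts=ts1])
    using e2 E(4) Cons.prems(4,5) w ts by auto
  have phi: "\<forall>(c, _, _) \<in> set \<phi>. c < m" using wf R(2) tr by fastforce
  have "sat (\<lambda>c. \<nu> c + t) \<phi>" using R(5) sat_cong[OF phi, of "\<lambda>c. \<nu> c + t" "\<lambda>c. \<nu>' c + t'"] ag
    by simp
  moreover have "t \<ge> 0" using Cons.prems(5) w by auto
  ultimately show ?case using IH R E(1) w ts' tr by auto
qed

theorem theorem4p1:
  fixes A1 :: "('s, 'l1) ta" and A2 :: "('s, 'l2) ta"
  assumes "well_formed A1" and "well_formed A2"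
    and "alph A1 = alph A2" and "nclk A1 = nclk A2"
    and "deterministic A1" and "deterministic A2"
    and "reset_clocked_lang A1 = reset_clocked_lang A2"
  shows "timed_lang A1 = timed_lang A2"
proof -
  have main: "w \<in> timed_lang B2"
    if wf: "well_formed B2" and al: "alph B1 = alph B2" and nc: "nclk B1 = nclk B2"
      and rl: "reset_clocked_lang B1 = reset_clocked_lang B2" and w: "w \<in> timed_lang B1"
    for B1 :: "('s, 'a) ta" and B2 :: "('s, 'b) ta" and w
  proof -
    from w obtain ts l' where ok: "\<forall>(s, t) \<in> set w. s \<in> alph B1 \<and> t \<ge> 0"
      and r: "run_from B1 (init B1) (\<lambda>_. 0) w ts l'" "l' \<in> acc B1"
      unfolding timed_lang_def accepting_run_def by auto
    have "rc_of (nclk B1) (\<lambda>_. 0) w ts \<in> reset_clocked_lang B1"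
      unfolding reset_clocked_lang_def accepting_run_def using r by blast
    then have "rc_of (nclk B1) (\<lambda>_. 0) w ts \<in> reset_clocked_lang B2" using rl by simp
    then obtain w' ts' l2 where eq: "rc_of (nclk B1) (\<lambda>_. 0) w ts = rc_of (nclk B2) (\<lambda>_. 0) w' ts'"
      and r2: "run_from B2 (init B2) (\<lambda>_. 0) w' ts' l2" "l2 \<in> acc B2"
      unfolding reset_clocked_lang_def accepting_run_def by blast
    have wf2: "\<forall>(l, s, \<phi>, B, l2) \<in> trans B2. (\<forall>(c, _, _) \<in> set \<phi>. c < nclk B2)"
      using wf unfolding well_formed_def by fastforce
    have "run_from B2 (init B2) (\<lambda>_. 0) w ts' l2"
      apply (rule transfer_run[OF wf2 r2(1), of "\<lambda>_. 0" w ts])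
      using eq nc run_len[OF r(1)] ok by auto
    then show ?thesis using r2(2) ok al unfolding timed_lang_def accepting_run_def by auto
  qed
  show ?thesis
    using main[OF assms(2,3,4,7)] main[OF assms(1) assms(3)[symmetric] assms(4)[symmetric] assms(7)[symmetric]]
    by blast
qed

end
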